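(* Let $N\ge1$, $\sigma_0>0$, $p_A\in(0,1)$, $a\ge0$. If $0<\sigma_1<\sigma_0$ and $\xi_>(a,\sigma_1)\le\tfrac12$, then $a\le\sigma_0\Phi^{-1}(p_A)$. If $\sigma_1>\sigma_0$ and $\xi_<(a,\sigma_1)\le\tfrac12$, then $a\le\sigma_0\Phi^{-1}(p_A)$. (Here $\sigma_0\Phi^{-1}(p_A)$ is the constant-$\sigma_0$ certified radius $\frac{\sigma_0}{2}(\Phi^{-1}(p_A)-\Phi^{-1}(1-p_A))$ of Cohen et al.)
   Context: $\Phi^{-1}$ is the quantile function of the standard normal distribution. $\chi^2_N(\lambda,x)=\mathbb{P}(\|Z+\mu\|^2\le x)$ for $Z\sim\mathcal{N}(0,I_N)$, $\|\mu\|^2=\lambda\ge 0$ (noncentral chi-squared cdf), and $\chi^2_{N,qf}(\lambda,p)=\inf\{x:\chi^2_N(\lambda,x)\ge p\}$ for $p\in(0,1)$. Fix $N$, $\sigma_0>0$, $p_A\in(0,1)$. For $a\ge0$ and $0<\sigma_1<\sigma_0$ define $$\xi_>(a,\sigma_1)=\chi^2_N\!\left(\frac{\sigma_1^2a^2}{(\sigma_0^2-\sigma_1^2)^2},\ \frac{\sigma_0^2}{\sigma_1^2}\chi^2_{N,qf}\!\left(\frac{\sigma_0^2a^2}{(\sigma_0^2-\sigma_1^2)^2},1-p_A\right)\right),$$ and for $\sigma_1>\sigma_0$ define $$\xi_<(a,\sigma_1)=1-\chi^2_N\!\left(\frac{\sigma_1^2a^2}{(\sigma_1^2-\sigma_0^2)^2},\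 \frac{\sigma_0^2}{\sigma_1^2}\chi^2_{N,qf}\!\left(\frac{\sigma_0^2a^2}{(\sigma_1^2-\sigma_0^2)^2},p_A\right)\right).$$ These equal the maximal probability $\mathbb{P}(f(Y_1)=B)$, $Y_1\sim\mathcal N(x_1,\sigma_1^2 I_N)$, over binary classifiers $f$ with $\mathbb{P}(f(Y_0)=B)\le 1-p_A$, $Y_0\sim\mathcal N(x_0,\sigma_0^2I_N)$, where $a=\|x_1-x_0\|$. *)

theory Defs
  imports "HOL-Probability.Probability"
begin

definition Phi :: "real \<Rightarrow> real" where
  "Phi x = measure (density lborel (\<lambda>t. ennreal (std_normal_density t))) {..x}"

definition Phi_inv :: "real \<Rightarrow> real" where
  "Phi_inv p = Inf {x. Phi x \<ge> p}"

definition std_gauss :: "(real ^ 'n) measure" where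
  "std_gauss = density lborel
     (\<lambda>z. ennreal ((2 * pi) powr (- real CARD('n) / 2) * exp (- (norm z)\<^sup>2 / 2)))"

(* A fixed vector mu with norm mu ^ 2 = lam (for lam >= 0); the cdf does not
   depend on the choice by rotation invariance. *)
definition ncvec :: "real \<Rightarrow> real ^ 'n" where
  "ncvec lam = sqrt lam *\<^sub>R axis (SOME i. True) 1"

definition nchi2_cdf :: "'n::finite itself \<Rightarrow> real \<Rightarrow> real \<Rightarrow> real" where
  "nchi2_cdf _ lam x =
     measure (std_gauss :: (real ^ 'n) measure)
       {z. (norm (z + (ncvec lam :: real ^ 'n)))\<^sup>2 \<le> x}"

definition nchi2_qf :: "'n::finite itself \<Rightarrow> real \<Rightarrow> real \<Rightarrow> real" where
  "nchi2_qf N lam p = Inf {x. nchi2_cdf N lam x \<ge> p}"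

definition xi_gt :: "'n::finite itself \<Rightarrow> real \<Rightarrow> real \<Rightarrow> real \<Rightarrow> real \<Rightarrow> real" where
  "xi_gt N sigma0 pA a sigma1 =
     nchi2_cdf N (sigma1\<^sup>2 * a\<^sup>2 / (sigma0\<^sup>2 - sigma1\<^sup>2)\<^sup>2)
       (sigma0\<^sup>2 / sigma1\<^sup>2 * nchi2_qf N (sigma0\<^sup>2 * a\<^sup>2 / (sigma0\<^sup>2 - sigma1\<^sup>2)\<^sup>2) (1 - pA))"

definition xi_lt :: "'n::finite itself \<Rightarrow> real \<Rightarrow> real \<Rightarrow> real \<Rightarrow> real \<Rightarrow> real" where
  "xi_lt N sigma0 pA a sigma1 =
     1 - nchi2_cdf N (sigma1\<^sup>2 * a\<^sup>2 / (sigma1\<^sup>2 - sigma0\<^sup>2)\<^sup>2)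
       (sigma0\<^sup>2 / sigma1\<^sup>2 * nchi2_qf N (sigma0\<^sup>2 * a\<^sup>2 / (sigma1\<^sup>2 - sigma0\<^sup>2)\<^sup>2) pA)"

end

theory Submission
  imports Defs
begin


definition gd :: "real^'n \<Rightarrow> real" where
  "gd z = (2*pi) powr (- real CARD('n)/2) * exp (-(norm z)\<^sup>2/2)"

lemma std_gauss_eq: "(std_gauss :: (real^'n) measure) = density lborel (\<lambda>z. ennreal (gd z))"
  by (simp add: std_gauss_def gd_def)

lemma psf: "product_sigma_finite (\<lambda>_::'a. lborel::real measure)"
  by (simp add: product_sigma_finite_def sigma_finite_lborel)

lemma inner_sum_Basis:
  assumes "b \<in> (Basis :: 'a::euclidean_space set)"
  shows "(\<Sum>b'\<in>Basis. f b' *\<^sub>R b') \<bullet> b = f b"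
  using assms by (simp add: inner_sum_left inner_Basis if_distrib cong: if_cong)

lemma norm_sum_Basis:
  "(norm (\<Sum>b'\<in>Basis. f b' *\<^sub>R b' :: 'a::euclidean_space))\<^sup>2 = (\<Sum>b\<in>Basis. (f b)\<^sup>2)"
proof -
  have "(norm (\<Sum>b'\<in>Basis. f b' *\<^sub>R b' :: 'a))\<^sup>2 = (\<Sum>b'\<in>Basis. f b' *\<^sub>R b') \<bullet> (\<Sum>b'\<in>Basis. f b' *\<^sub>R b')"
    by (simp add: power2_norm_eq_inner)
  also have "\<dots> = (\<Sum>b\<in>Basis. ((\<Sum>b'\<in>Basis. f b' *\<^sub>R b') \<bullet> b) * ((\<Sum>b'\<in>Basis. f b' *\<^sub>R b') \<bullet> b))"
    by (rule euclidean_inner)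
  also have "\<dots> = (\<Sum>b\<in>Basis. (f b)\<^sup>2)"
    by (rule sum.cong) (auto simp: inner_sum_Basis power2_eq_square)
  finally show ?thesis .
qed

lemma card_Basis_vec: "card (Basis :: (real^'n) set) = CARD('n)"
  by simp

lemma gd_sum: "gd (\<Sum>b\<in>Basis. f b *\<^sub>R b :: real^'n) = (\<Prod>b\<in>Basis. std_normal_density (f b))"
proof -
  have "(\<Prod>b\<in>(Basis::(real^'n) set). std_normal_density (f b))
      = (\<Prod>b\<in>(Basis::(real^'n) set). (1 / sqrt (2 * pi))) * (\<Prod>b\<in>(Basis::(real^'n) set). exp (- (f b)\<^sup>2 / 2))"
    by (subst prod.distrib[symmetric], rule prod.cong) (simp_all add: std_normal_density_def)
  also have "(\<Prod>b\<in>(Basis::(real^'n) set). exp (- (f b)\<^sup>2 / 2)) = exp (\<Sum>b\<in>(Basis::(real^'n) set). - (f b)\<^sup>2 / 2)"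
    by (simp add: exp_sum)
  also have "(\<Sum>b\<in>(Basis::(real^'n) set). - (f b)\<^sup>2 / 2) = - (norm (\<Sum>b\<in>Basis. f b *\<^sub>R b :: real^'n))\<^sup>2/2"
    by (simp add: norm_sum_Basis sum_negf sum_divide_distrib)
  also have "(\<Prod>b\<in>(Basis::(real^'n) set). (1 / sqrt (2 * pi))) = (2*pi) powr (- real CARD('n)/2)"
  proof -
    have a: "sqrt (2*pi) ^ CARD('n) = (2*pi) powr (real CARD('n)/2)"
    proof -
      have "sqrt (2*pi) ^ CARD('n) = sqrt (2*pi) powr real CARD('n)" by (simp add: powr_realpow)
      also have "\<dots> = ((2*pi) powr (1/2)) powr real CARD('n)" by (simp add: powr_half_sqrt)
      also have "\<dots> = (2*pi) powr (real CARD('n)/2)" by (simp add: powr_powr)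
      finally show ?thesis .
    qed
    have "(\<Prod>b\<in>(Basis::(real^'n) set). (1 / sqrt (2 * pi))) = (1 / sqrt (2*pi)) ^ CARD('n)"
      by simp
    also have "\<dots> = inverse (sqrt (2*pi) ^ CARD('n))"
      by (simp add: power_one_over inverse_eq_divide)
    also have "\<dots> = (2*pi) powr (-(real CARD('n)/2))"
      by (simp only: a powr_minus)
    also have "\<dots> = (2*pi) powr (- real CARD('n)/2)"
      by simp
    finally show ?thesis .
  qed
  finally show ?thesis by (simp add: gd_def)
qed

abbreviation N01 :: "real measure" where
  "N01 \<equiv> density lborel (\<lambda>t. ennreal (std_normal_density t))"

lemma N01_prob: "prob_space N01"
  using prob_space_normal_density[of 1 0] by simp

lemma nn_phi_1: "(\<integral>\<^sup>+x. ennreal (std_normal_density x) \<partial>lborel) = 1"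
proof -
  have "emeasure N01 (space N01) = 1" using N01_prob prob_space.emeasure_space_1 by blast
  then show ?thesis by (simp add: emeasure_density)
qed

lemma gauss_marg:
  assumes b0: "b0 \<in> (Basis :: (real^'n) set)" and B[measurable]: "B \<in> sets borel"
  shows "emeasure (std_gauss :: (real^'n) measure) {z. z \<bullet> b0 \<in> B} = emeasure N01 B"
proof -
  interpret P: product_sigma_finite "\<lambda>_::real^'n. lborel::real measure" by (rule psf)
  have meas[measurable]: "{z::real^'n. z \<bullet> b0 \<in> B} \<in> sets borel" by measurable
  have "emeasure (std_gauss :: (real^'n) measure) {z. z \<bullet> b0 \<in> B}
     = (\<integral>\<^sup>+z. ennreal (gd z) * indicator {z::real^'n. z \<bullet> b0 \<in> B} z \<partial>lborel)"
    by (simp add: std_gauss_eq emeasure_density gd_def)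
  also have "\<dots> = (\<integral>\<^sup>+f. ennreal (gd (\<Sum>b\<in>Basis. f b *\<^sub>R b :: real^'n)) * indicator {z::real^'n. z \<bullet> b0 \<in> B} (\<Sum>b\<in>Basis. f b *\<^sub>R b) \<partial>(\<Pi>\<^sub>M b\<in>(Basis::(real^'n) set). lborel))"
    apply (subst lborel_eq)
    apply (subst nn_integral_distr)
      apply (auto simp: gd_def)
    done
  also have "\<dots> = (\<integral>\<^sup>+f. (\<Prod>b\<in>(Basis::(real^'n) set). ennreal (std_normal_density (f b)) * (if b = b0 then indicator B (f b) else 1)) \<partial>(\<Pi>\<^sub>M b\<in>(Basis::(real^'n) set). lborel))"
  proof (rule nn_integral_cong)
    fix f :: "real^'n \<Rightarrow> real"
    have "(\<Prod>b\<in>(Basis::(real^'n) set). ennreal (std_normal_density (f b)) * (if b = b0 then indicator B (f b) else 1))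
        = (\<Prod>b\<in>(Basis::(real^'n) set). ennreal (std_normal_density (f b))) * (\<Prod>b\<in>(Basis::(real^'n) set). (if b = b0 then indicator B (f b) else 1))"
      by (rule prod.distrib)
    also have "(\<Prod>b\<in>(Basis::(real^'n) set). (if b = b0 then indicator B (f b) else 1)) = (indicator B (f b0) :: ennreal)"
      using b0 by (simp add: prod.delta)
    also have "(\<Prod>b\<in>(Basis::(real^'n) set). ennreal (std_normal_density (f b))) = ennreal (gd (\<Sum>b\<in>Basis. f b *\<^sub>R b :: real^'n))"
      by (simp add: gd_sum prod_ennreal)
    finally show "ennreal (gd (\<Sum>b\<in>Basis. f b *\<^sub>R b :: real^'n)) * indicator {z::real^'n. z \<bullet> b0 \<in> B} (\<Sum>b\<in>Basis. f b *\<^sub>R b)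
       = (\<Prod>b\<in>(Basis::(real^'n) set). ennreal (std_normal_density (f b)) * (if b = b0 then indicator B (f b) else 1))"
      using b0 by (simp add: inner_sum_Basis indicator_def)
  qed
  also have "\<dots> = (\<Prod>b\<in>(Basis::(real^'n) set). \<integral>\<^sup>+x. ennreal (std_normal_density x) * (if b = b0 then indicator B x else 1) \<partial>lborel)"
    by (rule P.product_nn_integral_prod) auto
  also have "\<dots> = (\<Prod>b\<in>(Basis::(real^'n) set). if b = b0 then (\<integral>\<^sup>+x. ennreal (std_normal_density x) * indicator B x \<partial>lborel) else 1)"
    by (rule prod.cong) (auto simp: nn_phi_1)
  also have "\<dots> = (\<integral>\<^sup>+x. ennreal (std_normal_density x) * indicator B x \<partial>lborel)"
    using b0 by (simp add: prod.delta)
  also have "\<dots> = emeasure N01 B" by (simp add: emeasure_density)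
  finally show ?thesis .
qed




lemma quantile_ge:
  assumes M: "real_distribution M" and p: "0 < p" "p < 1"
  shows "cdf M (Inf {x. cdf M x \<ge> p}) \<ge> p"
    and "\<And>x. x < Inf {x. cdf M x \<ge> p} \<Longrightarrow> cdf M x < p"
    and "isCont (cdf M) (Inf {x. cdf M x \<ge> p}) \<Longrightarrow> cdf M (Inf {x. cdf M x \<ge> p}) \<le> p"
proof -
  interpret real_distribution M by (rule M)
  define S where "S = {x. cdf M x \<ge> p}"
  define q where "q = Inf S"
  have "eventually (\<lambda>x. cdf M x > p) at_top"
    using cdf_lim_at_top_prob p(2) by (simp add: order_tendsto_iff)
  then obtain x0 where "cdf M x0 > p" by (auto simp: eventually_at_top_linorder)
  then have ne: "S \<noteq> {}" unfolding S_def by (blast intro: less_imp_le)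
  have "eventually (\<lambda>x. cdf M x < p) at_bot"
    using cdf_lim_at_bot p(1) by (simp add: order_tendsto_iff)
  then obtain L where L: "\<And>x. x \<le> L \<Longrightarrow> cdf M x < p" by (auto simp: eventually_at_bot_linorder)
  have bdd: "bdd_below S"
    unfolding S_def bdd_below_def by (metis L linorder_not_le mem_Collect_eq not_le order.strict_implies_order)
  have lt: "cdf M x < p" if "x < q" for x
  proof (rule ccontr)
    assume "\<not> cdf M x < p"
    then have "x \<in> S" by (simp add: S_def)
    then have "q \<le> x" unfolding q_def using bdd by (simp add: cInf_lower)
    with that show False by simp
  qed
  have ge: "cdf M x \<ge> p" if "x > q" for x
  proof -
    have "Inf S < x" using that q_def by simp
    then obtain s where "s \<in> S" "s < x" using cInf_lessD[OF ne] by blast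
    then show ?thesis using cdf_nondecreasing[of s x] by (simp add: S_def)
  qed
  have "cdf M q \<ge> p"
  proof (rule tendsto_lowerbound)
    show "(cdf M \<longlongrightarrow> cdf M q) (at_right q)"
      using cdf_is_right_cont[of q] by (simp add: continuous_within)
    show "\<forall>\<^sub>F x in at_right q. p \<le> cdf M x"
      using ge by (auto simp: eventually_at_right_less eventually_at_filter)
  qed simp
  then show "cdf M (Inf {x. cdf M x \<ge> p}) \<ge> p" by (simp add: q_def S_def)
  show "\<And>x. x < Inf {x. cdf M x \<ge> p} \<Longrightarrow> cdf M x < p" using lt by (simp add: q_def S_def)
  assume c: "isCont (cdf M) (Inf {x. cdf M x \<ge> p})"
  have "cdf M q \<le> p"
  proof (rule tendsto_upperbound)
    show "(cdf M \<longlongrightarrow> cdf M q) (at_left q)"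
      using c by (simp add: q_def S_def filterlim_at_split isCont_def)
    show "\<forall>\<^sub>F x in at_left q. cdf M x \<le> p"
      using lt by (auto simp: eventually_at_filter less_imp_le)
  qed simp
  then show "cdf M (Inf {x. cdf M x \<ge> p}) \<le> p" by (simp add: q_def S_def)
qed

lemma N01_rd: "real_distribution N01"
  using N01_prob by (simp add: real_distribution_def real_distribution_axioms_def)

lemma Phi_cdf: "Phi = cdf N01"
  by (simp add: fun_eq_iff Phi_def cdf_def)

lemma N01_sym: "distr N01 borel uminus = N01"
proof -
  have "N01 = density lborel (\<lambda>t. ennreal (std_normal_density (- t)))"
    by (simp add: std_normal_density_def)
  also have "distr \<dots> borel uminus = density (distr lborel borel uminus) (\<lambda>t. ennreal (std_normal_density t))"
    by (subst density_distr) auto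
  also have "\<dots> = N01" by (simp add: lborel_distr_uminus)
  finally show ?thesis
    by (metis \<open>N01 = density lborel (\<lambda>t. ennreal (std_normal_density (- t)))\<close>)
qed

lemma N01_sym_meas: "B \<in> sets borel \<Longrightarrow> measure N01 (uminus -` B) = measure N01 B"
proof -
  assume [measurable]: "B \<in> sets borel"
  have "measure N01 B = measure (distr N01 borel uminus) B" by (simp add: N01_sym)
  also have "\<dots> = measure N01 (uminus -` B)" by (simp add: measure_distr)
  finally show ?thesis by simp
qed

lemma N01_point: "measure N01 {x} = 0"
proof -
  have "emeasure N01 {x} = (\<integral>\<^sup>+t. ennreal (std_normal_density t) * indicator {x} t \<partial>lborel)"
    by (simp add: emeasure_density)
  also have "\<dots> = 0"
  proof -
    have ae: "AE t in lborel. ennreal (std_normal_density t) * indicator {x} t = 0"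
      using AE_lborel_singleton[of x] by (rule eventually_mono) auto
    then show ?thesis by (subst nn_integral_0_iff_AE) auto
  qed
  finally show ?thesis by (simp add: measure_def)
qed

lemma N01_pos_interval:
  assumes "(0::real) < y" shows "measure N01 {0..<y} > 0"
proof -
  have "emeasure N01 {0..<y} = (\<integral>\<^sup>+t. ennreal (std_normal_density t) * indicator {0..<y} t \<partial>lborel)"
    by (simp add: emeasure_density)
  moreover have "(\<integral>\<^sup>+t. ennreal (std_normal_density t) * indicator {0..<y} t \<partial>lborel) \<noteq> 0"
  proof
    assume "(\<integral>\<^sup>+t. ennreal (std_normal_density t) * indicator {0..<y} t \<partial>lborel) = 0"
    then have "AE t in lborel. ennreal (std_normal_density t) * indicator {0..<y} t = 0"
      by (subst (asm) nn_integral_0_iff_AE) auto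
    then have "AE t in lborel. t \<notin> {0..<y}"
      using normal_density_pos[of 1 0] by (auto elim!: eventually_mono split: split_indicator) (metis order_less_irrefl)
    then have "emeasure lborel {0..<y} = 0"
      by (subst (asm) AE_iff_measurable[of "{0..<y}"]) auto
    with assms show False by simp
  qed
  ultimately have ne: "emeasure N01 {0..<y} \<noteq> 0" by simp
  interpret N: prob_space N01 by (rule N01_prob)
  have "measure N01 {0..<y} \<noteq> 0"
    using ne N.emeasure_eq_measure by fastforce
  then show ?thesis using measure_nonneg[of N01 "{0..<y}"] by linarith
qed

lemma N01_compl: "B \<in> sets borel \<Longrightarrow> measure N01 (UNIV - B) = 1 - measure N01 B"
  using prob_space.prob_compl[OF N01_prob, of B] by simp

lemma N01_half: "measure N01 {..<0::real} = 1/2"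
proof -
  have e: "uminus -` {..<0::real} = {0<..}" by auto
  have "measure N01 {..<0::real} = measure N01 {0<..}"
    using N01_sym_meas[of "{..<0}"] by (simp only: e) simp
  also have "\<dots> = 1 - measure N01 {..0}"
    using N01_compl[of "{..0}"] by (simp add: Compl_eq_Diff_UNIV[symmetric] Compl_atMost)
  also have "measure N01 {..0::real} = measure N01 {..<0} + measure N01 {0}"
  proof -
    interpret N: prob_space N01 by (rule N01_prob)
    have u: "{..0::real} = {..<0} \<union> {0}" by auto
    show ?thesis unfolding u by (rule N.finite_measure_Union) auto
  qed
  finally show ?thesis by (simp add: N01_point)
qed

lemma N01_gt_half_left:
  assumes "(0::real) < y" shows "measure N01 {..<y} > 1/2"
proof -
  have "measure N01 {..<y} = measure N01 {..<0} + measure N01 {0..<y}"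
  proof -
    interpret N: prob_space N01 by (rule N01_prob)
    have u: "{..<y} = {..<0} \<union> {0..<y}" using assms by auto
    have "N.prob ({..<0} \<union> {0..<y}) = N.prob {..<0} + N.prob {0..<y}"
      by (rule N.finite_measure_Union) auto
    then show ?thesis using u by simp
  qed
  then show ?thesis using N01_half N01_pos_interval[OF assms] by simp
qed

lemma N01_gt_half_right:
  assumes "(y::real) < 0" shows "measure N01 {y<..} > 1/2"
proof -
  have e: "uminus -` {..< -y} = {y<..}" by auto
  have "measure N01 {y<..} = measure N01 {..< -y}"
    using N01_sym_meas[of "{..< -y}"] by (simp only: e) simp
  then show ?thesis using N01_gt_half_left[of "-y"] assms by simp
qed

lemma Phi_inv_props:
  assumes "0 < pA" "pA < 1"
  shows "measure N01 {Phi_inv pA<..} \<le> 1 - pA" "measure N01 {..< - Phi_inv pA} \<le> 1 - pA"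
proof -
  have c: "cdf N01 (Phi_inv pA) \<ge> pA"
    using quantile_ge(1)[OF N01_rd assms] by (simp add: Phi_inv_def Phi_cdf)
  have "measure N01 {Phi_inv pA<..} = 1 - measure N01 {..Phi_inv pA}"
    using N01_compl[of "{..Phi_inv pA}"] by (simp add: Compl_eq_Diff_UNIV[symmetric] Compl_atMost)
  then show 1: "measure N01 {Phi_inv pA<..} \<le> 1 - pA" using c by (simp add: cdf_def)
  have e: "uminus -` {..< - Phi_inv pA} = {Phi_inv pA<..}" by auto
  have "measure N01 {..< - Phi_inv pA} = measure N01 {Phi_inv pA<..}"
    using N01_sym_meas[of "{..< - Phi_inv pA}"] by (simp only: e) simp
  then show "measure N01 {..< - Phi_inv pA} \<le> 1 - pA" using 1 by simp
qed




lemma nn_integral_affine_vec: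
  fixes F :: "'a::euclidean_space \<Rightarrow> ennreal"
  assumes [measurable]: "F \<in> borel_measurable borel" and c: "c \<noteq> 0"
  shows "(\<integral>\<^sup>+x. F x \<partial>lborel) = (\<integral>\<^sup>+x. ennreal (\<bar>c\<bar>^DIM('a)) * F (t + c *\<^sub>R x) \<partial>lborel)"
  by (subst lborel_affine[OF c, of t]) (simp add: nn_integral_density nn_integral_distr)

lemma ind_int:
  fixes f :: "'a::euclidean_space \<Rightarrow> real"
  shows "A \<in> sets borel \<Longrightarrow> integrable lborel f \<Longrightarrow> integrable lborel (\<lambda>x. indicator A x * f x)"
  using integrable_real_mult_indicator[of A lborel f] by (simp add: mult.commute)

lemma measure_density_integral:
  fixes f :: "'a::euclidean_space \<Rightarrow> real"
  assumes [measurable]: "f \<in> borel_measurable borel" "A \<in> sets borel"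
    and nn: "\<And>x. 0 \<le> f x" and int: "integrable lborel f"
  shows "measure (density lborel (\<lambda>x. ennreal (f x))) A = (\<integral>x. indicator A x * f x \<partial>lborel)"
proof -
  have i: "integrable lborel (\<lambda>x. indicator A x * f x)"
    using int by (intro ind_int) simp_all
  have "emeasure (density lborel (\<lambda>x. ennreal (f x))) A = (\<integral>\<^sup>+x. ennreal (f x) * indicator A x \<partial>lborel)"
    by (simp add: emeasure_density)
  also have "\<dots> = (\<integral>\<^sup>+x. ennreal (indicator A x * f x) \<partial>lborel)"
    by (rule nn_integral_cong) (auto split: split_indicator)
  also have "\<dots> = ennreal (\<integral>x. indicator A x * f x \<partial>lborel)"
    using i nn by (intro nn_integral_eq_integral) auto
  finally show ?thesis
    using nn by (simp add: measure_def integral_nonneg_AE)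
qed

lemma NP:
  fixes f0 f1 :: "'a::euclidean_space \<Rightarrow> real"
  assumes [measurable]: "f0 \<in> borel_measurable borel" "f1 \<in> borel_measurable borel"
    "S \<in> sets borel" "H \<in> sets borel"
  and nn0: "\<And>x. 0 \<le> f0 x" and nn1: "\<And>x. 0 \<le> f1 x"
  and int0: "integrable lborel f0" and int1: "integrable lborel f1"
  and t: "0 \<le> t"
  and inS: "\<And>x. x \<in> S \<Longrightarrow> t * f0 x \<le> f1 x"
  and outS: "\<And>x. x \<notin> S \<Longrightarrow> f1 x \<le> t * f0 x"
  and P0: "measure (density lborel (\<lambda>x. ennreal (f0 x))) H \<le> measure (density lborel (\<lambda>x. ennreal (f0 x))) S"
  shows "measure (density lborel (\<lambda>x. ennreal (f1 x))) H \<le> measure (density lborel (\<lambda>x. ennreal (f1 x))) S"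
proof -
  have iS0: "integrable lborel (\<lambda>x. indicator S x * f0 x)" using int0 by (intro ind_int) simp_all
  have iH0: "integrable lborel (\<lambda>x. indicator H x * f0 x)" using int0 by (intro ind_int) simp_all
  have iS1: "integrable lborel (\<lambda>x. indicator S x * f1 x)" using int1 by (intro ind_int) simp_all
  have iH1: "integrable lborel (\<lambda>x. indicator H x * f1 x)" using int1 by (intro ind_int) simp_all
  have "(\<integral>x. indicator H x * f1 x + t * (indicator S x * f0 x) \<partial>lborel)
      \<le> (\<integral>x. indicator S x * f1 x + t * (indicator H x * f0 x) \<partial>lborel)"
  proof (rule integral_mono)
    show "integrable lborel (\<lambda>x. indicator H x * f1 x + t * (indicator S x * f0 x))"
      using iH1 iS0 by auto
    show "integrable lborel (\<lambda>x. indicator S x * f1 x + t * (indicator H x * f0 x))"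
      using iS1 iH0 by auto
    fix x
    show "indicator H x * f1 x + t * (indicator S x * f0 x) \<le> indicator S x * f1 x + t * (indicator H x * f0 x)"
      using inS[of x] outS[of x] by (cases "x \<in> S"; cases "x \<in> H") auto
  qed
  then have "(\<integral>x. indicator H x * f1 x \<partial>lborel) + t * (\<integral>x. indicator S x * f0 x \<partial>lborel)
      \<le> (\<integral>x. indicator S x * f1 x \<partial>lborel) + t * (\<integral>x. indicator H x * f0 x \<partial>lborel)"
    using iS0 iH0 iS1 iH1 by (simp add: integral_add)
  moreover have "(\<integral>x. indicator H x * f0 x \<partial>lborel) \<le> (\<integral>x. indicator S x * f0 x \<partial>lborel)"
    using P0 by (simp add: measure_density_integral nn0 int0)
  ultimately have "(\<integral>x. indicator H x * f1 x \<partial>lborel) \<le> (\<integral>x. indicator S x * f1 x \<partial>lborel)"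
    using t by (smt (verit) mult_left_mono)
  then show ?thesis by (simp add: measure_density_integral nn1 int1)
qed

lemma null_density:
  fixes g :: "'a::euclidean_space \<Rightarrow> real"
  assumes "A \<in> null_sets lborel" and [measurable]: "g \<in> borel_measurable borel"
  shows "emeasure (density lborel (\<lambda>x. ennreal (g x))) A = 0"
proof -
  have [measurable]: "A \<in> sets borel" using assms by (simp add: null_sets_def)
  have [simp]: "A \<in> sets lborel" using assms by (simp add: null_sets_def)
  have "emeasure (density lborel (\<lambda>x. ennreal (g x))) A = (\<integral>\<^sup>+x. ennreal (g x) * indicator A x \<partial>lborel)"
    by (simp add: emeasure_density)
  also have "\<dots> = 0"
  proof -
    have "AE x in lborel. ennreal (g x) * indicator A x = 0"
      using AE_not_in[OF assms(1)] by (rule eventually_mono) auto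
    then show ?thesis by (subst nn_integral_0_iff_AE) auto
  qed
  finally show ?thesis .
qed

lemma sphere_null: "sphere (c::'a::euclidean_space) r \<in> null_sets lborel"
  using negligible_sphere[of c r]
  by (auto simp: null_sets_completion_iff negligible_iff_null_sets negligible_convex_frontier)




lemma norm_lin1:
  fixes w b :: "'a::real_inner"
  assumes b: "norm b = 1"
  shows "(norm (c *\<^sub>R w + d *\<^sub>R b))\<^sup>2 = c\<^sup>2 * (norm w)\<^sup>2 + 2 * c * d * (w \<bullet> b) + d\<^sup>2"
proof -
  have bb: "b \<bullet> b = 1" using b by (simp add: power2_norm_eq_inner[symmetric])
  show ?thesis
    unfolding power2_norm_eq_inner
    by (simp add: inner_add_left inner_add_right bb inner_commute power2_eq_square algebra_simps)
qed

lemma rho_eq: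
  fixes w b :: "real^'n"
  assumes b: "norm b = 1" and s1: "sigma1 > 0" and rel: "s0 * (sigma1\<^sup>2 - sigma0\<^sup>2) = sigma0 * mu"
  shows "gd ((1/sigma1) *\<^sub>R (sigma0 *\<^sub>R w - mu *\<^sub>R b))
     = exp (((sigma1\<^sup>2 - sigma0\<^sup>2) * (norm (w + s0 *\<^sub>R b))\<^sup>2 - mu\<^sup>2 - (sigma1\<^sup>2 - sigma0\<^sup>2) * s0\<^sup>2) / (2 * sigma1\<^sup>2)) * gd w"
proof -
  define W where "W = (norm w)\<^sup>2"
  define u where "u = w \<bullet> b"
  have e1: "(norm ((1/sigma1) *\<^sub>R (sigma0 *\<^sub>R w - mu *\<^sub>R b)))\<^sup>2 = (sigma0\<^sup>2 * W - 2 * sigma0 * mu * u + mu\<^sup>2) / sigma1\<^sup>2"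
  proof -
    have v: "(1/sigma1) *\<^sub>R (sigma0 *\<^sub>R w - mu *\<^sub>R b) = (sigma0/sigma1) *\<^sub>R w + (- mu/sigma1) *\<^sub>R b"
      by (simp add: algebra_simps scaleR_diff_right divide_inverse)
    have "(norm ((1/sigma1) *\<^sub>R (sigma0 *\<^sub>R w - mu *\<^sub>R b)))\<^sup>2
        = (sigma0/sigma1)\<^sup>2 * W + 2 * (sigma0/sigma1) * (-mu/sigma1) * u + (-mu/sigma1)\<^sup>2"
      unfolding v W_def u_def by (rule norm_lin1[OF b])
    also have "\<dots> = (sigma0\<^sup>2 * W - 2 * sigma0 * mu * u + mu\<^sup>2) / sigma1\<^sup>2"
      using s1 by (simp add: field_simps power2_eq_square)
    finally show ?thesis .
  qed
  have e2: "(norm (w + s0 *\<^sub>R b))\<^sup>2 = W + 2 * s0 * u + s0\<^sup>2"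
    using norm_lin1[OF b, of 1 w s0] by (simp add: W_def u_def)
  have key: "(sigma1\<^sup>2 - sigma0\<^sup>2) * (W + 2 * s0 * u + s0\<^sup>2) - mu\<^sup>2 - (sigma1\<^sup>2 - sigma0\<^sup>2) * s0\<^sup>2
      = (sigma1\<^sup>2 - sigma0\<^sup>2) * W + 2 * u * (s0 * (sigma1\<^sup>2 - sigma0\<^sup>2)) - mu\<^sup>2"
    by (simp add: algebra_simps)
  have ex: "- ((sigma0\<^sup>2 * W - 2 * sigma0 * mu * u + mu\<^sup>2) / sigma1\<^sup>2) / 2
     = ((sigma1\<^sup>2 - sigma0\<^sup>2) * (W + 2 * s0 * u + s0\<^sup>2) - mu\<^sup>2 - (sigma1\<^sup>2 - sigma0\<^sup>2) * s0\<^sup>2) / (2 * sigma1\<^sup>2) + - W / 2"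
    unfolding key rel using s1 by (simp add: field_simps)
  show ?thesis
    unfolding gd_def e1 e2 W_def[symmetric]
    by (subst ex) (simp only: exp_add mult_ac)
qed




lemma gd_nonneg: "0 \<le> gd z" by (simp add: gd_def)
lemma gd_meas[measurable]: "gd \<in> borel_measurable borel" unfolding gd_def[abs_def] by measurable

lemma std_gauss_space: "space (std_gauss :: (real^'n) measure) = UNIV"
  by (simp add: std_gauss_def)

lemma std_gauss_sets: "sets (std_gauss :: (real^'n) measure) = sets borel"
  by (simp add: std_gauss_def)

lemma gauss_meas:
  assumes "b0 \<in> (Basis :: (real^'n) set)" "B \<in> sets borel"
  shows "measure (std_gauss :: (real^'n) measure) {z. z \<bullet> b0 \<in> B} = measure N01 B"
  using gauss_marg[OF assms] by (simp add: measure_def)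

lemma std_gauss_prob: "prob_space (std_gauss :: (real^'n) measure)"
proof
  have b0: "axis (SOME i. True) 1 \<in> (Basis :: (real^'n) set)" by simp
  have "emeasure (std_gauss :: (real^'n) measure) {z. z \<bullet> axis (SOME i. True) 1 \<in> UNIV} = emeasure N01 UNIV"
    by (rule gauss_marg[OF b0]) simp
  moreover have "emeasure N01 UNIV = 1"
    using prob_space.emeasure_space_1[OF N01_prob] by simp
  ultimately show "emeasure (std_gauss :: (real^'n) measure) (space std_gauss) = 1"
    by (simp add: std_gauss_space)
qed

lemma P1_eq:
  fixes m :: "real^'n"
  assumes s0: "sigma0 > 0" and s1: "sigma1 > 0" and A[measurable]: "A \<in> sets borel"
  shows "emeasure (std_gauss::(real^'n) measure) {z. (1/sigma0) *\<^sub>R (m + sigma1 *\<^sub>R z) \<in> A}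
     = emeasure (density lborel (\<lambda>w. ennreal ((sigma0/sigma1)^CARD('n) * gd ((1/sigma1) *\<^sub>R (sigma0 *\<^sub>R w - m))))) A"
proof -
  have mT[measurable]: "{z::real^'n. (1/sigma0) *\<^sub>R (m + sigma1 *\<^sub>R z) \<in> A} \<in> sets borel" by measurable
  have TS: "(1/sigma0) *\<^sub>R (m + sigma1 *\<^sub>R ((-(1/sigma1) *\<^sub>R m) + (sigma0/sigma1) *\<^sub>R w)) = w" for w :: "real^'n"
  proof -
    have nz: "sigma1 \<noteq> 0" using s1 by simp
    have e1: "sigma1 *\<^sub>R ((sigma0/sigma1) *\<^sub>R w) = sigma0 *\<^sub>R w" using nz by simp
    have e2: "sigma1 *\<^sub>R ((-(1/sigma1)) *\<^sub>R m) = - m" using nz by simp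
    have "sigma1 *\<^sub>R ((-(1/sigma1) *\<^sub>R m) + (sigma0/sigma1) *\<^sub>R w) = sigma0 *\<^sub>R w - m"
      by (simp only: scaleR_add_right e1 e2) simp
    then show ?thesis using s0 by simp
  qed
  have SS: "(-(1/sigma1) *\<^sub>R m) + (sigma0/sigma1) *\<^sub>R w = (1/sigma1) *\<^sub>R (sigma0 *\<^sub>R w - m)" for w :: "real^'n"
    by (simp add: scaleR_diff_right algebra_simps)
  have "emeasure (std_gauss::(real^'n) measure) {z. (1/sigma0) *\<^sub>R (m + sigma1 *\<^sub>R z) \<in> A}
      = (\<integral>\<^sup>+z. ennreal (gd z) * indicator {z::real^'n. (1/sigma0) *\<^sub>R (m + sigma1 *\<^sub>R z) \<in> A} z \<partial>lborel)"
    by (simp add: std_gauss_eq emeasure_density)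
  also have "\<dots> = (\<integral>\<^sup>+w. ennreal (\<bar>sigma0/sigma1\<bar>^DIM(real^'n)) *
       (ennreal (gd ((-(1/sigma1) *\<^sub>R m) + (sigma0/sigma1) *\<^sub>R w)) *
        indicator {z::real^'n. (1/sigma0) *\<^sub>R (m + sigma1 *\<^sub>R z) \<in> A} ((-(1/sigma1) *\<^sub>R m) + (sigma0/sigma1) *\<^sub>R w)) \<partial>lborel)"
    apply (rule nn_integral_affine_vec)
     apply measurable
    using s0 s1 apply simp
    done
  also have "\<dots> = (\<integral>\<^sup>+w. ennreal ((sigma0/sigma1)^CARD('n) * gd ((1/sigma1) *\<^sub>R (sigma0 *\<^sub>R w - m))) * indicator A w \<partial>lborel)"
  proof (rule nn_integral_cong)
    fix w :: "real^'n"
    have "ennreal (\<bar>sigma0/sigma1\<bar>^DIM(real^'n)) * ennreal (gd ((1/sigma1) *\<^sub>R (sigma0 *\<^sub>R w - m)))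
        = ennreal ((sigma0/sigma1)^CARD('n) * gd ((1/sigma1) *\<^sub>R (sigma0 *\<^sub>R w - m)))"
      using s0 s1 by (simp add: ennreal_mult[symmetric] gd_nonneg)
    note cst = this
    have mem: "indicator {z::real^'n. (1/sigma0) *\<^sub>R (m + sigma1 *\<^sub>R z) \<in> A} ((-(1/sigma1) *\<^sub>R m) + (sigma0/sigma1) *\<^sub>R w) = (indicator A w :: ennreal)"
      by (simp only: indicator_def mem_Collect_eq TS)
    show "ennreal (\<bar>sigma0/sigma1\<bar>^DIM(real^'n)) *
       (ennreal (gd ((-(1/sigma1) *\<^sub>R m) + (sigma0/sigma1) *\<^sub>R w)) *
        indicator {z::real^'n. (1/sigma0) *\<^sub>R (m + sigma1 *\<^sub>R z) \<in> A} ((-(1/sigma1) *\<^sub>R m) + (sigma0/sigma1) *\<^sub>R w))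
      = ennreal ((sigma0/sigma1)^CARD('n) * gd ((1/sigma1) *\<^sub>R (sigma0 *\<^sub>R w - m))) * indicator A w"
      unfolding SS[symmetric] mem by (simp only: mult.assoc[symmetric] SS cst)
  qed
  also have "\<dots> = emeasure (density lborel (\<lambda>w. ennreal ((sigma0/sigma1)^CARD('n) * gd ((1/sigma1) *\<^sub>R (sigma0 *\<^sub>R w - m))))) A"
    by (simp add: emeasure_density)
  finally show ?thesis .
qed

definition chiM :: "'n::finite itself \<Rightarrow> real \<Rightarrow> real measure" where
  "chiM N lam = distr (std_gauss::(real^'n) measure) borel (\<lambda>z. (norm (z + ncvec lam))\<^sup>2)"

lemma chiM_rd: "real_distribution (chiM (N::'n::finite itself) lam)"
proof -
  interpret G: prob_space "std_gauss :: (real^'n) measure" by (rule std_gauss_prob)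
  have "(\<lambda>z::real^'n. (norm (z + ncvec lam))\<^sup>2) \<in> borel_measurable (std_gauss :: (real^'n) measure)"
    using measurable_cong_sets[OF std_gauss_sets refl] by (simp add: measurable_cong_sets[OF std_gauss_sets refl])
  then show ?thesis unfolding chiM_def by (rule G.real_distribution_distr)
qed

lemma chiM_cdf: "cdf (chiM (N::'n::finite itself) lam) x = nchi2_cdf N lam x"
proof -
  have [measurable]: "(\<lambda>z::real^'n. (norm (z + ncvec lam))\<^sup>2) \<in> borel_measurable (std_gauss :: (real^'n) measure)"
    by (simp add: measurable_cong_sets[OF std_gauss_sets refl])
  show ?thesis
    unfolding cdf_def chiM_def nchi2_cdf_def
    by (subst measure_distr) (auto simp: std_gauss_space vimage_def)
qed

lemma chiM_qf: "nchi2_qf (N::'n::finite itself) lam p = Inf {x. cdf (chiM N lam) x \<ge> p}"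
  by (simp add: nchi2_qf_def chiM_cdf)

lemma nchi2_qf_ge:
  assumes "0 < p" "p < 1"
  shows "nchi2_cdf (N::'n::finite itself) lam (nchi2_qf N lam p) \<ge> p"
  using quantile_ge(1)[OF chiM_rd assms] by (simp add: chiM_qf chiM_cdf)

lemma nchi2_qf_le:
  assumes "0 < p" "p < 1"
  shows "nchi2_cdf (N::'n::finite itself) lam (nchi2_qf N lam p) \<le> p"
proof -
  interpret R: real_distribution "chiM N lam" by (rule chiM_rd)
  define q where "q = nchi2_qf N lam p"
  have [measurable]: "(\<lambda>z::real^'n. (norm (z + ncvec lam))\<^sup>2) \<in> borel_measurable (std_gauss :: (real^'n) measure)"
    by (simp add: measurable_cong_sets[OF std_gauss_sets refl])
  have sub: "{z::real^'n. (norm (z + ncvec lam))\<^sup>2 = q} \<subseteq> sphere (- ncvec lam) (sqrt q)"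
    by (auto simp: dist_norm norm_minus_commute)
  have "emeasure (std_gauss :: (real^'n) measure) (sphere (- ncvec lam) (sqrt q)) = 0"
    unfolding std_gauss_eq by (rule null_density[OF sphere_null]) simp
  then have "emeasure (std_gauss :: (real^'n) measure) {z::real^'n. (norm (z + ncvec lam))\<^sup>2 = q} = 0"
    using emeasure_mono[OF sub, of "std_gauss :: (real^'n) measure"]
    by (simp add: std_gauss_sets)
  then have "measure (chiM N lam) {q} = 0"
    unfolding chiM_def
    by (subst measure_distr) (auto simp: std_gauss_space vimage_def measure_def)
  then have "isCont (cdf (chiM N lam)) q" by (simp add: R.isCont_cdf)
  then show ?thesis
    using quantile_ge(3)[OF chiM_rd assms] by (simp add: q_def chiM_qf chiM_cdf)
qed




lemma gauss_compl:
  assumes "A \<in> sets borel"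
  shows "measure (std_gauss::(real^'n) measure) (UNIV - A) = 1 - measure std_gauss A"
  using prob_space.prob_compl[OF std_gauss_prob, of A] assms by (simp add: std_gauss_space std_gauss_sets)

lemma lr_ineq:
  fixes w b :: "real^'n"
  assumes s0: "0 < sigma0" and s1: "0 < sigma1" and b: "norm b = 1"
    and rel: "s0 * (sigma1\<^sup>2 - sigma0\<^sup>2) = sigma0 * mu"
  shows "(sigma1\<^sup>2 - sigma0\<^sup>2) * ((norm (w + s0 *\<^sub>R b))\<^sup>2 - q) \<ge> 0 \<Longrightarrow>
      (sigma0/sigma1)^CARD('n) * exp (((sigma1\<^sup>2 - sigma0\<^sup>2) * q - mu\<^sup>2 - (sigma1\<^sup>2 - sigma0\<^sup>2) * s0\<^sup>2) / (2 * sigma1\<^sup>2)) * gd w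
      \<le> (sigma0/sigma1)^CARD('n) * gd ((1/sigma1) *\<^sub>R (sigma0 *\<^sub>R w - mu *\<^sub>R b))"
    and "(sigma1\<^sup>2 - sigma0\<^sup>2) * ((norm (w + s0 *\<^sub>R b))\<^sup>2 - q) \<le> 0 \<Longrightarrow>
      (sigma0/sigma1)^CARD('n) * gd ((1/sigma1) *\<^sub>R (sigma0 *\<^sub>R w - mu *\<^sub>R b))
      \<le> (sigma0/sigma1)^CARD('n) * exp (((sigma1\<^sup>2 - sigma0\<^sup>2) * q - mu\<^sup>2 - (sigma1\<^sup>2 - sigma0\<^sup>2) * s0\<^sup>2) / (2 * sigma1\<^sup>2)) * gd w"
proof -
  define C where "C = (sigma0/sigma1)^CARD('n)"
  define D where "D = sigma1\<^sup>2 - sigma0\<^sup>2"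
  define X where "X = (norm (w + s0 *\<^sub>R b))\<^sup>2"
  have C: "C \<ge> 0" using s0 s1 by (simp add: C_def)
  have r: "(sigma0/sigma1)^CARD('n) * gd ((1/sigma1) *\<^sub>R (sigma0 *\<^sub>R w - mu *\<^sub>R b))
      = C * (exp ((D * X - mu\<^sup>2 - D * s0\<^sup>2) / (2 * sigma1\<^sup>2)) * gd w)"
    unfolding C_def D_def X_def by (simp add: rho_eq[OF b s1 rel])
  have tt: "(sigma0/sigma1)^CARD('n) * exp (((sigma1\<^sup>2 - sigma0\<^sup>2) * q - mu\<^sup>2 - (sigma1\<^sup>2 - sigma0\<^sup>2) * s0\<^sup>2) / (2 * sigma1\<^sup>2)) * gd w
      = C * (exp ((D * q - mu\<^sup>2 - D * s0\<^sup>2) / (2 * sigma1\<^sup>2)) * gd w)"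
    unfolding C_def D_def by (simp add: mult.assoc)
  have pos: "0 < 2 * sigma1\<^sup>2" using s1 by simp
  show "(sigma1\<^sup>2 - sigma0\<^sup>2) * ((norm (w + s0 *\<^sub>R b))\<^sup>2 - q) \<ge> 0 \<Longrightarrow>
      (sigma0/sigma1)^CARD('n) * exp (((sigma1\<^sup>2 - sigma0\<^sup>2) * q - mu\<^sup>2 - (sigma1\<^sup>2 - sigma0\<^sup>2) * s0\<^sup>2) / (2 * sigma1\<^sup>2)) * gd w
      \<le> (sigma0/sigma1)^CARD('n) * gd ((1/sigma1) *\<^sub>R (sigma0 *\<^sub>R w - mu *\<^sub>R b))"
  proof -
    assume h: "(sigma1\<^sup>2 - sigma0\<^sup>2) * ((norm (w + s0 *\<^sub>R b))\<^sup>2 - q) \<ge> 0"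
    then have "D * q \<le> D * X" unfolding D_def X_def by (simp add: algebra_simps)
    then have "(D * q - mu\<^sup>2 - D * s0\<^sup>2) / (2 * sigma1\<^sup>2) \<le> (D * X - mu\<^sup>2 - D * s0\<^sup>2) / (2 * sigma1\<^sup>2)"
      using pos by (intro divide_right_mono) auto
    then have e: "exp ((D * q - mu\<^sup>2 - D * s0\<^sup>2) / (2 * sigma1\<^sup>2)) \<le> exp ((D * X - mu\<^sup>2 - D * s0\<^sup>2) / (2 * sigma1\<^sup>2))"
      by simp
    show ?thesis unfolding r tt
      by (rule mult_left_mono[OF mult_right_mono[OF e gd_nonneg] C])
  qed
  show "(sigma1\<^sup>2 - sigma0\<^sup>2) * ((norm (w + s0 *\<^sub>R b))\<^sup>2 - q) \<le> 0 \<Longrightarrow>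
      (sigma0/sigma1)^CARD('n) * gd ((1/sigma1) *\<^sub>R (sigma0 *\<^sub>R w - mu *\<^sub>R b))
      \<le> (sigma0/sigma1)^CARD('n) * exp (((sigma1\<^sup>2 - sigma0\<^sup>2) * q - mu\<^sup>2 - (sigma1\<^sup>2 - sigma0\<^sup>2) * s0\<^sup>2) / (2 * sigma1\<^sup>2)) * gd w"
  proof -
    assume h: "(sigma1\<^sup>2 - sigma0\<^sup>2) * ((norm (w + s0 *\<^sub>R b))\<^sup>2 - q) \<le> 0"
    then have "D * X \<le> D * q" unfolding D_def X_def by (simp add: algebra_simps)
    then have "(D * X - mu\<^sup>2 - D * s0\<^sup>2) / (2 * sigma1\<^sup>2) \<le> (D * q - mu\<^sup>2 - D * s0\<^sup>2) / (2 * sigma1\<^sup>2)"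
      using pos by (intro divide_right_mono) auto
    then have e: "exp ((D * X - mu\<^sup>2 - D * s0\<^sup>2) / (2 * sigma1\<^sup>2)) \<le> exp ((D * q - mu\<^sup>2 - D * s0\<^sup>2) / (2 * sigma1\<^sup>2))"
      by simp
    show ?thesis unfolding r tt
      by (rule mult_left_mono[OF mult_right_mono[OF e gd_nonneg] C])
  qed
qed

lemma core:
  fixes b :: "real^'n" and S H :: "(real^'n) set"
  assumes s0: "0 < sigma0" and s1: "0 < sigma1" and b: "norm b = 1"
    and rel: "s0 * (sigma1\<^sup>2 - sigma0\<^sup>2) = sigma0 * mu"
    and Sm[measurable]: "S \<in> sets borel" and Hm[measurable]: "H \<in> sets borel"
    and inS: "\<And>w. w \<in> S \<Longrightarrow> (sigma1\<^sup>2 - sigma0\<^sup>2) * ((norm (w + s0 *\<^sub>R b))\<^sup>2 - q) \<ge> 0"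
    and outS: "\<And>w. w \<notin> S \<Longrightarrow> (sigma1\<^sup>2 - sigma0\<^sup>2) * ((norm (w + s0 *\<^sub>R b))\<^sup>2 - q) \<le> 0"
    and P0: "measure (std_gauss::(real^'n) measure) H \<le> measure std_gauss S"
  shows "measure (std_gauss::(real^'n) measure) {z. (1/sigma0) *\<^sub>R (mu *\<^sub>R b + sigma1 *\<^sub>R z) \<in> H}
       \<le> measure (std_gauss::(real^'n) measure) {z. (1/sigma0) *\<^sub>R (mu *\<^sub>R b + sigma1 *\<^sub>R z) \<in> S}"
proof -
  define rho where "rho = (\<lambda>w::real^'n. (sigma0/sigma1)^CARD('n) * gd ((1/sigma1) *\<^sub>R (sigma0 *\<^sub>R w - mu *\<^sub>R b)))"
  define t where "t = (sigma0/sigma1)^CARD('n) * exp (((sigma1\<^sup>2 - sigma0\<^sup>2) * q - mu\<^sup>2 - (sigma1\<^sup>2 - sigma0\<^sup>2) * s0\<^sup>2) / (2 * sigma1\<^sup>2))"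
  have P1e: "emeasure (std_gauss::(real^'n) measure) {z. (1/sigma0) *\<^sub>R (mu *\<^sub>R b + sigma1 *\<^sub>R z) \<in> A} = emeasure (density lborel (\<lambda>w. ennreal (rho w))) A"
    if "A \<in> sets borel" for A
    using P1_eq[OF s0 s1 that, of "mu *\<^sub>R b"] by (simp add: rho_def)
  have P1: "measure (std_gauss::(real^'n) measure) {z. (1/sigma0) *\<^sub>R (mu *\<^sub>R b + sigma1 *\<^sub>R z) \<in> A} = measure (density lborel (\<lambda>w. ennreal (rho w))) A"
    if "A \<in> sets borel" for A
    using P1e[OF that] by (simp add: measure_def)
  have rho_meas[measurable]: "rho \<in> borel_measurable borel" unfolding rho_def by measurable
  have rho_nn: "\<And>w. 0 \<le> rho w" using s0 s1 by (simp add: rho_def gd_nonneg)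
  have gd_int: "integrable lborel (gd :: real^'n \<Rightarrow> real)"
  proof (rule integrableI_nonneg)
    show "(gd :: real^'n \<Rightarrow> real) \<in> borel_measurable lborel" by simp
    show "AE x in lborel. 0 \<le> (gd :: real^'n \<Rightarrow> real) x" by (simp add: gd_nonneg)
    have "(\<integral>\<^sup>+x. ennreal (gd (x::real^'n)) \<partial>lborel) = emeasure (std_gauss::(real^'n) measure) UNIV"
      by (simp add: std_gauss_eq emeasure_density)
    also have "\<dots> = 1" using prob_space.emeasure_space_1[OF std_gauss_prob] by (simp add: std_gauss_space)
    finally show "(\<integral>\<^sup>+x. ennreal ((gd :: real^'n \<Rightarrow> real) x) \<partial>lborel) < \<infinity>" by simp
  qed
  have rho_int: "integrable lborel rho"
  proof (rule integrableI_nonneg)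
    show "rho \<in> borel_measurable lborel" by simp
    show "AE x in lborel. 0 \<le> rho x" by (simp add: rho_nn)
    have "(\<integral>\<^sup>+x. ennreal (rho x) \<partial>lborel) = emeasure (density lborel (\<lambda>w. ennreal (rho w))) UNIV"
      by (simp add: emeasure_density)
    also have "\<dots> = emeasure (std_gauss::(real^'n) measure) {z. (1/sigma0) *\<^sub>R (mu *\<^sub>R b + sigma1 *\<^sub>R z) \<in> UNIV}"
      by (rule P1e[symmetric]) simp
    also have "\<dots> = 1" using prob_space.emeasure_space_1[OF std_gauss_prob] by (simp add: std_gauss_space)
    finally show "(\<integral>\<^sup>+x. ennreal (rho x) \<partial>lborel) < \<infinity>" by simp
  qed
  have inS': "\<And>x. x \<in> S \<Longrightarrow> t * gd x \<le> rho x"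
    using lr_ineq(1)[OF s0 s1 b rel] inS unfolding rho_def t_def by blast
  have outS': "\<And>x. x \<notin> S \<Longrightarrow> rho x \<le> t * gd x"
    using lr_ineq(2)[OF s0 s1 b rel] outS unfolding rho_def t_def by blast
  have P0': "measure (density lborel (\<lambda>x. ennreal (gd x))) H \<le> measure (density lborel (\<lambda>x. ennreal ((gd :: real^'n \<Rightarrow> real) x))) S"
    using P0 by (simp add: std_gauss_eq)
  have t0: "0 \<le> t" using s0 s1 by (simp add: t_def)
  have "measure (density lborel (\<lambda>x. ennreal (rho x))) H \<le> measure (density lborel (\<lambda>x. ennreal (rho x))) S"
    by (rule NP[OF gd_meas rho_meas Sm Hm gd_nonneg rho_nn gd_int rho_int t0 inS' outS' P0'])
  then show ?thesis using P1[OF Sm] P1[OF Hm] by simp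
qed




lemma Tshift:
  fixes b z :: "real^'n"
  assumes s0: "0 < sigma0" and rel2: "mu + sigma0 * r0 = sigma1 * r1"
  shows "(1/sigma0) *\<^sub>R (mu *\<^sub>R b + sigma1 *\<^sub>R z) + r0 *\<^sub>R b = (sigma1/sigma0) *\<^sub>R (z + r1 *\<^sub>R b)"
proof -
  have c1: "mu/sigma0 + r0 = sigma1/sigma0 * r1" using rel2 s0 by (simp add: field_simps)
  have "(1/sigma0) *\<^sub>R (mu *\<^sub>R b + sigma1 *\<^sub>R z) + r0 *\<^sub>R b = (mu/sigma0 + r0) *\<^sub>R b + (sigma1/sigma0) *\<^sub>R z"
    by (simp add: scaleR_add_right scaleR_add_left)
  also have "\<dots> = (sigma1/sigma0) *\<^sub>R (z + r1 *\<^sub>R b)"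
    by (simp add: c1 scaleR_add_right)
  finally show ?thesis .
qed

lemma scal_le:
  fixes A B q s0 s1 :: real
  assumes "0 < s0" "0 < s1" "A = (s1/s0)\<^sup>2 * B"
  shows "(A \<le> q) = (B \<le> s0\<^sup>2 / s1\<^sup>2 * q)"
proof -
  have p: "0 < (s1/s0)\<^sup>2" using assms by simp
  have "(A \<le> q) = (B * (s1/s0)\<^sup>2 \<le> q)" using assms(3) by (simp add: mult.commute)
  also have "\<dots> = (B \<le> q / (s1/s0)\<^sup>2)" using pos_le_divide_eq[OF p] by simp
  also have "q / (s1/s0)\<^sup>2 = s0\<^sup>2 / s1\<^sup>2 * q" using assms by (simp add: power_divide field_simps)
  finally show ?thesis .
qed

lemma Tnorm:
  fixes b z :: "real^'n"
  assumes s0: "0 < sigma0" and s1: "0 < sigma1" and rel2: "mu + sigma0 * r0 = sigma1 * r1"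
  shows "((norm ((1/sigma0) *\<^sub>R (mu *\<^sub>R b + sigma1 *\<^sub>R z) + r0 *\<^sub>R b))\<^sup>2 \<le> q)
     = ((norm (z + r1 *\<^sub>R b))\<^sup>2 \<le> sigma0\<^sup>2 / sigma1\<^sup>2 * q)"
proof -
  have "(norm ((1/sigma0) *\<^sub>R (mu *\<^sub>R b + sigma1 *\<^sub>R z) + r0 *\<^sub>R b))\<^sup>2 = (sigma1/sigma0)\<^sup>2 * (norm (z + r1 *\<^sub>R b))\<^sup>2"
    unfolding Tshift[OF s0 rel2] norm_scaleR power_mult_distrib power2_abs by simp
  then show ?thesis by (rule scal_le[OF s0 s1])
qed

lemma Tinner:
  fixes b z :: "real^'n"
  assumes b: "norm b = 1"
  shows "((1/sigma0) *\<^sub>R (mu *\<^sub>R b + sigma1 *\<^sub>R z)) \<bullet> b = (mu + sigma1 * (z \<bullet> b)) / sigma0"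
proof -
  have bb: "b \<bullet> b = 1" using b by (simp add: power2_norm_eq_inner[symmetric])
  show ?thesis by (simp add: inner_add_left bb divide_inverse algebra_simps)
qed

lemma case1:
  fixes N :: "'n::finite itself"
  assumes s0: "sigma0 > 0" and pA: "0 < pA" "pA < 1" and a: "a \<ge> 0"
    and s1: "0 < sigma1" "sigma1 < sigma0"
    and xi: "xi_gt N sigma0 pA a sigma1 \<le> 1/2"
  shows "a \<le> sigma0 * Phi_inv pA"
proof (rule ccontr)
  assume "\<not> a \<le> sigma0 * Phi_inv pA"
  then have ak: "sigma0 * Phi_inv pA < a" by simp
  define k where "k = Phi_inv pA"
  define b :: "real^'n" where "b = axis (SOME i. True) 1"
  define D where "D = sigma0\<^sup>2 - sigma1\<^sup>2"
  have "sigma1\<^sup>2 < sigma0\<^sup>2" by (rule power_strict_mono) (use s1 in auto)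
  then have D: "D > 0" by (simp add: D_def)
  define lam0 where "lam0 = sigma0\<^sup>2 * a\<^sup>2 / (sigma0\<^sup>2 - sigma1\<^sup>2)\<^sup>2"
  define lam1 where "lam1 = sigma1\<^sup>2 * a\<^sup>2 / (sigma0\<^sup>2 - sigma1\<^sup>2)\<^sup>2"
  define r0 where "r0 = sigma0 * a / D"
  define r1 where "r1 = sigma1 * a / D"
  have lr0: "lam0 = r0\<^sup>2" by (simp add: lam0_def r0_def D_def power_divide power_mult_distrib)
  have lr1: "lam1 = r1\<^sup>2" by (simp add: lam1_def r1_def D_def power_divide power_mult_distrib)
  have "r0 \<ge> 0" using s0 a D by (simp add: r0_def)
  then have sq0: "sqrt lam0 = r0" by (simp add: lr0)
  have "r1 \<ge> 0" using s1 a D by (simp add: r1_def)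
  then have sq1: "sqrt lam1 = r1" by (simp add: lr1)
  have nc0: "ncvec lam0 = r0 *\<^sub>R b" by (simp add: ncvec_def b_def sq0)
  have nc1: "ncvec lam1 = r1 *\<^sub>R b" by (simp add: ncvec_def b_def sq1)
  define q where "q = nchi2_qf N lam0 (1 - pA)"
  have xi_eq: "xi_gt N sigma0 pA a sigma1 = nchi2_cdf N lam1 (sigma0\<^sup>2 / sigma1\<^sup>2 * q)"
    by (simp add: xi_gt_def lam0_def lam1_def q_def)
  define mu where "mu = - a"
  have rel: "r0 * (sigma1\<^sup>2 - sigma0\<^sup>2) = sigma0 * mu"
    using D by (simp add: r0_def mu_def D_def field_simps)
  have rel2: "mu + sigma0 * r0 = sigma1 * r1"
    using D by (simp add: r0_def r1_def mu_def D_def field_simps power2_eq_square)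
  have b1: "norm b = 1" "b \<in> Basis" by (simp_all add: b_def)
  define S where "S = {w::real^'n. (norm (w + r0 *\<^sub>R b))\<^sup>2 \<le> q}"
  define H where "H = {w::real^'n. w \<bullet> b \<in> {..< -k}}"
  have Sm: "S \<in> sets borel" unfolding S_def by measurable
  have Hm: "H \<in> sets borel" unfolding H_def by measurable
  have P0S: "measure (std_gauss::(real^'n) measure) S = nchi2_cdf N lam0 q"
    by (simp add: S_def nchi2_cdf_def nc0)
  have P0H: "measure (std_gauss::(real^'n) measure) H = measure N01 {..< -k}"
    using gauss_meas[OF b1(2), of "{..< -k}"] by (simp add: H_def)
  have P0: "measure (std_gauss::(real^'n) measure) H \<le> measure std_gauss S"
    using Phi_inv_props(2)[OF pA] nchi2_qf_ge[of "1-pA" N lam0] pA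
    by (simp add: P0S P0H q_def k_def)
  have neg: "sigma1\<^sup>2 - sigma0\<^sup>2 < 0" using D by (simp add: D_def)
  have inS: "\<And>w. w \<in> S \<Longrightarrow> (sigma1\<^sup>2 - sigma0\<^sup>2) * ((norm (w + r0 *\<^sub>R b))\<^sup>2 - q) \<ge> 0"
    using neg by (auto simp: S_def intro!: mult_nonpos_nonpos)
  have outS: "\<And>w. w \<notin> S \<Longrightarrow> (sigma1\<^sup>2 - sigma0\<^sup>2) * ((norm (w + r0 *\<^sub>R b))\<^sup>2 - q) \<le> 0"
    using neg by (auto simp: S_def intro!: mult_nonpos_nonneg)
  have main: "measure (std_gauss::(real^'n) measure) {z. (1/sigma0) *\<^sub>R (mu *\<^sub>R b + sigma1 *\<^sub>R z) \<in> H}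
       \<le> measure (std_gauss::(real^'n) measure) {z. (1/sigma0) *\<^sub>R (mu *\<^sub>R b + sigma1 *\<^sub>R z) \<in> S}"
    by (rule core[OF s0 s1(1) b1(1) rel Sm Hm inS outS P0])
  have preS: "{z. (1/sigma0) *\<^sub>R (mu *\<^sub>R b + sigma1 *\<^sub>R z) \<in> S} = {z. (norm (z + ncvec lam1))\<^sup>2 \<le> sigma0\<^sup>2 / sigma1\<^sup>2 * q}"
    unfolding S_def nc1 using Tnorm[OF s0 s1(1) rel2] by auto
  define y where "y = (a - sigma0 * k) / sigma1"
  have y: "y > 0" using ak s1 by (simp add: y_def k_def)
  have preH: "{z. (1/sigma0) *\<^sub>R (mu *\<^sub>R b + sigma1 *\<^sub>R z) \<in> H} = {z. z \<bullet> b \<in> {..< y}}"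
  proof -
    have eq: "(mu + sigma1 * u) / sigma0 < - k \<longleftrightarrow> u < y" for u
      using s0 s1 by (simp add: y_def mu_def field_simps)
    have ti: "((1/sigma0) *\<^sub>R (mu *\<^sub>R b + sigma1 *\<^sub>R z)) \<bullet> b = (mu + sigma1 * (z \<bullet> b)) / sigma0" for z
      by (rule Tinner[OF b1(1)])
    show ?thesis unfolding H_def by (simp only: mem_Collect_eq lessThan_iff ti eq)
  qed
  have gm: "measure (std_gauss::(real^'n) measure) {z. z \<bullet> b \<in> {..<y}} = measure N01 {..<y}"
    by (rule gauss_meas[OF b1(2)]) simp
  have "measure N01 {..< y} \<le> xi_gt N sigma0 pA a sigma1"
    using main unfolding preS preH xi_eq nchi2_cdf_def gm .
  moreover have "measure N01 {..< y} > 1/2" by (rule N01_gt_half_left[OF y])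
  ultimately show False using xi by simp
qed

lemma case2:
  fixes N :: "'n::finite itself"
  assumes s0: "sigma0 > 0" and pA: "0 < pA" "pA < 1" and a: "a \<ge> 0"
    and s1: "sigma0 < sigma1"
    and xi: "xi_lt N sigma0 pA a sigma1 \<le> 1/2"
  shows "a \<le> sigma0 * Phi_inv pA"
proof (rule ccontr)
  assume "\<not> a \<le> sigma0 * Phi_inv pA"
  then have ak: "sigma0 * Phi_inv pA < a" by simp
  have s1p: "0 < sigma1" using s0 s1 by simp
  define k where "k = Phi_inv pA"
  define b :: "real^'n" where "b = axis (SOME i. True) 1"
  define D where "D = sigma1\<^sup>2 - sigma0\<^sup>2"
  have "sigma0\<^sup>2 < sigma1\<^sup>2" by (rule power_strict_mono) (use s0 s1 in auto)
  then have D: "D > 0" by (simp add: D_def)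
  define lam0 where "lam0 = sigma0\<^sup>2 * a\<^sup>2 / (sigma1\<^sup>2 - sigma0\<^sup>2)\<^sup>2"
  define lam1 where "lam1 = sigma1\<^sup>2 * a\<^sup>2 / (sigma1\<^sup>2 - sigma0\<^sup>2)\<^sup>2"
  define r0 where "r0 = sigma0 * a / D"
  define r1 where "r1 = sigma1 * a / D"
  have lr0: "lam0 = r0\<^sup>2" by (simp add: lam0_def r0_def D_def power_divide power_mult_distrib)
  have lr1: "lam1 = r1\<^sup>2" by (simp add: lam1_def r1_def D_def power_divide power_mult_distrib)
  have "r0 \<ge> 0" using s0 a D by (simp add: r0_def)
  then have sq0: "sqrt lam0 = r0" by (simp add: lr0)
  have "r1 \<ge> 0" using s1p a D by (simp add: r1_def)
  then have sq1: "sqrt lam1 = r1" by (simp add: lr1)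
  have nc0: "ncvec lam0 = r0 *\<^sub>R b" by (simp add: ncvec_def b_def sq0)
  have nc1: "ncvec lam1 = r1 *\<^sub>R b" by (simp add: ncvec_def b_def sq1)
  define q where "q = nchi2_qf N lam0 pA"
  have xi_eq: "xi_lt N sigma0 pA a sigma1 = 1 - nchi2_cdf N lam1 (sigma0\<^sup>2 / sigma1\<^sup>2 * q)"
    by (simp add: xi_lt_def lam0_def lam1_def q_def)
  define mu where "mu = a"
  have rel: "r0 * (sigma1\<^sup>2 - sigma0\<^sup>2) = sigma0 * mu"
    using D by (simp add: r0_def mu_def D_def field_simps)
  have rel2: "mu + sigma0 * r0 = sigma1 * r1"
    using D by (simp add: r0_def r1_def mu_def D_def field_simps power2_eq_square)
  have b1: "norm b = 1" "b \<in> Basis" by (simp_all add: b_def)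
  define S0 where "S0 = {w::real^'n. (norm (w + r0 *\<^sub>R b))\<^sup>2 \<le> q}"
  define S where "S = UNIV - S0"
  define H where "H = {w::real^'n. w \<bullet> b \<in> {k <..}}"
  have S0m: "S0 \<in> sets borel" unfolding S0_def by measurable
  have Sm: "S \<in> sets borel" unfolding S_def using S0m by measurable
  have Hm: "H \<in> sets borel" unfolding H_def by measurable
  have P0S: "measure (std_gauss::(real^'n) measure) S = 1 - nchi2_cdf N lam0 q"
    unfolding S_def gauss_compl[OF S0m] by (simp add: S0_def nchi2_cdf_def nc0)
  have P0H: "measure (std_gauss::(real^'n) measure) H = measure N01 {k <..}"
    using gauss_meas[OF b1(2), of "{k <..}"] by (simp add: H_def)
  have P0: "measure (std_gauss::(real^'n) measure) H \<le> measure std_gauss S"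
    using Phi_inv_props(1)[OF pA] nchi2_qf_le[of pA N lam0] pA
    by (simp add: P0S P0H q_def k_def)
  have pos: "sigma1\<^sup>2 - sigma0\<^sup>2 > 0" using D by (simp add: D_def)
  have inS: "\<And>w. w \<in> S \<Longrightarrow> (sigma1\<^sup>2 - sigma0\<^sup>2) * ((norm (w + r0 *\<^sub>R b))\<^sup>2 - q) \<ge> 0"
    using pos by (auto simp: S_def S0_def intro!: mult_nonneg_nonneg)
  have outS: "\<And>w. w \<notin> S \<Longrightarrow> (sigma1\<^sup>2 - sigma0\<^sup>2) * ((norm (w + r0 *\<^sub>R b))\<^sup>2 - q) \<le> 0"
    using pos by (auto simp: S_def S0_def intro!: mult_nonneg_nonpos)
  have main: "measure (std_gauss::(real^'n) measure) {z. (1/sigma0) *\<^sub>R (mu *\<^sub>R b + sigma1 *\<^sub>R z) \<in> H}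
       \<le> measure (std_gauss::(real^'n) measure) {z. (1/sigma0) *\<^sub>R (mu *\<^sub>R b + sigma1 *\<^sub>R z) \<in> S}"
    by (rule core[OF s0 s1p b1(1) rel Sm Hm inS outS P0])
  define Q where "Q = {z::real^'n. (norm (z + ncvec lam1))\<^sup>2 \<le> sigma0\<^sup>2 / sigma1\<^sup>2 * q}"
  have Qm: "Q \<in> sets borel" unfolding Q_def by measurable
  have preS: "{z. (1/sigma0) *\<^sub>R (mu *\<^sub>R b + sigma1 *\<^sub>R z) \<in> S} = UNIV - Q"
    unfolding S_def S0_def Q_def nc1 using Tnorm[OF s0 s1p rel2] by auto
  have PS: "measure (std_gauss::(real^'n) measure) {z. (1/sigma0) *\<^sub>R (mu *\<^sub>R b + sigma1 *\<^sub>R z) \<in> S}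
      = xi_lt N sigma0 pA a sigma1"
    unfolding preS gauss_compl[OF Qm] xi_eq by (simp add: Q_def nchi2_cdf_def)
  define y where "y = (sigma0 * k - a) / sigma1"
  have y: "y < 0" using ak s1p by (simp add: y_def k_def divide_neg_pos)
  have preH: "{z. (1/sigma0) *\<^sub>R (mu *\<^sub>R b + sigma1 *\<^sub>R z) \<in> H} = {z. z \<bullet> b \<in> {y <..}}"
  proof -
    have eq: "k < (mu + sigma1 * u) / sigma0 \<longleftrightarrow> y < u" for u
      using s0 s1p by (simp add: y_def mu_def field_simps)
    have ti: "((1/sigma0) *\<^sub>R (mu *\<^sub>R b + sigma1 *\<^sub>R z)) \<bullet> b = (mu + sigma1 * (z \<bullet> b)) / sigma0" for z
      by (rule Tinner[OF b1(1)])
    show ?thesis unfolding H_def by (simp only: mem_Collect_eq greaterThan_iff ti eq)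
  qed
  have gm: "measure (std_gauss::(real^'n) measure) {z. z \<bullet> b \<in> {y<..}} = measure N01 {y<..}"
    by (rule gauss_meas[OF b1(2)]) simp
  have "measure N01 {y <..} \<le> xi_lt N sigma0 pA a sigma1"
    using main unfolding PS preH gm .
  moreover have "measure N01 {y <..} > 1/2" by (rule N01_gt_half_right[OF y])
  ultimately show False using xi by simp
qed

theorem mainTheorem8:
  fixes N :: "'n::finite itself"
    and sigma0 pA a :: real
  assumes "sigma0 > 0" and "0 < pA" and "pA < 1" and "a \<ge> 0"
  shows "(\<forall>sigma1. 0 < sigma1 \<and> sigma1 < sigma0 \<and> xi_gt N sigma0 pA a sigma1 \<le> 1/2
            \<longrightarrow> a \<le> sigma0 * Phi_inv pA)
       \<and> (\<forall>sigma1. sigma1 > sigma0 \<and> xi_lt N sigma0 pA a sigma1 \<le> 1/2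
            \<longrightarrow> a \<le> sigma0 * Phi_inv pA)"
  using case1[OF assms] case2[OF assms] by blast


end
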